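(* Let $P$ be a Poisson tensor on $\mathbb{R}^3$, let $H\in C^\infty(\mathbb{R}^3)$, and let $S\in C^\infty(\mathbb{R}^3)$ be a Casimir function for $P$, i.e. $PdS=0$. Let $g$ be the symmetric tensor with components $g^{ij}=H^iH^j-\delta^{ij}\sum_k H^kH^k$. Then at every point of $\mathbb{R}^3$ the vectors $PdH$ and $gdS$ are orthogonal with respect to the Euclidean metric.
   Context: $\mathbb{R}^3$ carries the standard Euclidean metric $h$, used to identify tangent and cotangent spaces with $\mathbb{R}^3$; $H^i=H_i=\partial H/\partial x^i$ in standard coordinates. A Poisson tensor is a skew-symmetric bivector field whose bracket $\{F,G\}=dF\cdot PdG$ satisfies the Jacobi identity. *)

theory Defs
  imports "HOL-Analysis.Analysis"
begin

text \<open>Points of R^3 are vectors of type real^3 (Euclidean metric = inner product).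
  Partial derivative H_i = dH/dx^i in standard coordinates.\<close>
definition pd :: "3 \<Rightarrow> (real^3 \<Rightarrow> real) \<Rightarrow> real^3 \<Rightarrow> real" where
  "pd i f x = frechet_derivative f (at x) (axis i 1)"

fun iter_pd :: "3 list \<Rightarrow> (real^3 \<Rightarrow> real) \<Rightarrow> real^3 \<Rightarrow> real" where
  "iter_pd [] f = f"
| "iter_pd (i # is) f = pd i (iter_pd is f)"

definition smooth :: "(real^3 \<Rightarrow> real) \<Rightarrow> bool" where
  "smooth f \<longleftrightarrow> (\<forall>is x. iter_pd is f differentiable (at x))"

text \<open>Gradient dF, identified with a vector via the Euclidean metric.\<close>
definition grad :: "(real^3 \<Rightarrow> real) \<Rightarrow> real^3 \<Rightarrow> real^3" where
  "grad f x = (\<chi> i. pd i f x)"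

text \<open>Bivector field P (components P x $ i $ j = P^{ij}) and its bracket {F,G} = dF . P dG.\<close>
definition pbracket :: "(real^3 \<Rightarrow> real^3^3) \<Rightarrow> (real^3 \<Rightarrow> real) \<Rightarrow> (real^3 \<Rightarrow> real) \<Rightarrow> real^3 \<Rightarrow> real" where
  "pbracket P F G x = grad F x \<bullet> (P x *v grad G x)"

definition poisson_tensor :: "(real^3 \<Rightarrow> real^3^3) \<Rightarrow> bool" where
  "poisson_tensor P \<longleftrightarrow>
     (\<forall>i j. smooth (\<lambda>x. P x $ i $ j)) \<and>
     (\<forall>x. transpose (P x) = - P x) \<and>
     (\<forall>F G K. smooth F \<longrightarrow> smooth G \<longrightarrow> smooth K \<longrightarrow>
        (\<forall>x. pbracket P F (pbracket P G K) x + pbracket P G (pbracket P K F) x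
             + pbracket P K (pbracket P F G) x = 0))"

definition gtensor :: "(real^3 \<Rightarrow> real) \<Rightarrow> real^3 \<Rightarrow> real^3^3" where
  "gtensor H x = (\<chi> i j. grad H x $ i * grad H x $ j
       - (if i = j then 1 else 0) * (\<Sum>k\<in>UNIV. grad H x $ k * grad H x $ k))"

end

theory Submission
  imports Defs
begin

lemma skew_form:
  fixes M :: "real^3^3"
  assumes "transpose M = - M"
  shows "(M *v a) \<bullet> b = - (a \<bullet> (M *v b))"
proof -
  have "(M *v a) \<bullet> b = (a v* transpose M) \<bullet> b" by (simp only: vector_transpose_matrix)
  also have "\<dots> = a \<bullet> (transpose M *v b)" by (rule dot_lmul_matrix)
  also have "\<dots> = - (a \<bullet> (M *v b))"
  proof -
    have "(- M) *v b = - (M *v b)"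
      by (simp add: vec_eq_iff matrix_vector_mult_def sum_negf)
    then show ?thesis using assms by (simp add: inner_minus_right)
  qed
  finally show ?thesis .
qed

lemma gmul:
  fixes a b :: "real^3"
  shows "(\<chi> i j. a $ i * a $ j - (if i = j then 1 else 0) * (\<Sum>k\<in>UNIV. a $ k * a $ k)) *v b
       = (a \<bullet> b) *\<^sub>R a - (a \<bullet> a) *\<^sub>R b"
unfolding vec_eq_iff
proof
  fix i
  show "((\<chi> i j. a $ i * a $ j - (if i = j then 1 else 0) * (\<Sum>k\<in>UNIV. a $ k * a $ k)) *v b) $ i
       = ((a \<bullet> b) *\<^sub>R a - (a \<bullet> a) *\<^sub>R b) $ i"
  proof -
    have d: "(\<Sum>j\<in>UNIV. (if i = j then 1 else 0) * c * b $ j) = c * b $ i" for c :: real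
    proof -
      have "(\<lambda>j. (if i = j then 1 else 0) * c * b $ j) = (\<lambda>j. if i = j then c * b $ j else 0)"
        by auto
      then show ?thesis by (simp only:) simp
    qed
    define c where "c = (\<Sum>k\<in>UNIV. a $ k * a $ k)"
    have cc: "c = a \<bullet> a" by (simp add: c_def inner_vec_def)
    have "((\<chi> i j. a $ i * a $ j - (if i = j then 1 else 0) * (\<Sum>k\<in>UNIV. a $ k * a $ k)) *v b) $ i
        = (\<Sum>j\<in>UNIV. (a $ i * a $ j - (if i = j then 1 else 0) * c) * b $ j)"
      by (simp add: matrix_vector_mult_def c_def)
    also have "\<dots> = (\<Sum>j\<in>UNIV. a $ i * (a $ j * b $ j)) - (\<Sum>j\<in>UNIV. (if i = j then 1 else 0) * c * b $ j)"
      by (simp add: left_diff_distrib sum_subtractf mult.assoc)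
    also have "\<dots> = a $ i * (a \<bullet> b) - c * b $ i"
      by (simp add: d inner_vec_def sum_distrib_left)
    finally show ?thesis by (simp add: cc mult.commute)
  qed
qed

theorem mainTheorem2:
  fixes P :: "real^3 \<Rightarrow> real^3^3" and H S :: "real^3 \<Rightarrow> real"
  assumes "poisson_tensor P"
    and "smooth H"
    and "smooth S"
    and "\<forall>x. P x *v grad S x = 0"
  shows "\<forall>x. (P x *v grad H x) \<bullet> (gtensor H x *v grad S x) = 0"
proof
  fix x
  define a where "a = grad H x"
  define b where "b = grad S x"
  have sk: "transpose (P x) = - P x" using assms(1) by (simp add: poisson_tensor_def)
  have cb: "P x *v b = 0" using assms(4) b_def by simp
  have g: "gtensor H x *v b = (a \<bullet> b) *\<^sub>R a - (a \<bullet> a) *\<^sub>R b"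
    unfolding gtensor_def a_def[symmetric] by (rule gmul)
  have 1: "(P x *v a) \<bullet> a = 0" using skew_form[OF sk, of a a]
    by (simp add: inner_commute)
  have 2: "(P x *v a) \<bullet> b = 0" using skew_form[OF sk, of a b] cb by simp
  show "(P x *v grad H x) \<bullet> (gtensor H x *v grad S x) = 0"
    unfolding a_def[symmetric] b_def[symmetric] g
    by (simp add: inner_diff_right 1 2)
qed

end
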